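(* Consider the robust dynamic pricing problem with valuation $v^\star\in[0,1]$, horizon $T$, and at most $C$ corrupted feedback observations. If $C$ is known to the learner, then there exists a pricing algorithm with regret \[ R_T\le\mathcal O(C+\log T), \] with a hidden constant independent of $T$, $C$, $v^\star$ and the adversary.
   Context: Robust dynamic pricing: there are $T$ rounds and an unknown valuation $v^\star$. At each round $t$ the seller posts a price $p_t\in[0,1]$ (based on past observations). The true sale indicator is $y_t=\mathbbm 1\{p_t\le v^\star\}$; the seller observes $\sigma_t\in\{0,1\}$, and at most $C$ rounds are corrupted: $|\{t\in[T]:\sigma_t\neq y_t\}|\le C$, where on corrupted rounds $\sigma_t$ may be chosen adversarially. Revenue is $r_t=p_t\,\mathbbm 1\{p_t\le v^\star\}$ and regret is $R_T=Tv^\star-\sum_{t=1}^T r_t$. $\log$ is base $2$. *)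

theory Defs
  imports Complex_Main
begin

text \<open>A (deterministic) pricing algorithm receives the horizon T, the corruption
budget C and the history of (posted price, observed feedback) pairs, and
returns the next price. An (adaptive) adversary receives the history and the
currently posted price and returns the observed feedback sigma_t.\<close>

type_synonym pricing_alg = "nat \<Rightarrow> nat \<Rightarrow> (real \<times> bool) list \<Rightarrow> real"
type_synonym adversary = "(real \<times> bool) list \<Rightarrow> real \<Rightarrow> bool"

fun hist :: "pricing_alg \<Rightarrow> adversary \<Rightarrow> nat \<Rightarrow> nat \<Rightarrow> nat \<Rightarrow> (real \<times> bool) list" where
  "hist alg adv T C 0 = []"
| "hist alg adv T C (Suc t) =
     (let h = hist alg adv T C t; p = alg T C h in h @ [(p, adv h p)])"

definition price :: "pricing_alg \<Rightarrow> adversary \<Rightarrow> nat \<Rightarrow> nat \<Rightarrow> nat \<Rightarrow> real" where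
  "price alg adv T C t = alg T C (hist alg adv T C t)"

definition feedback :: "pricing_alg \<Rightarrow> adversary \<Rightarrow> nat \<Rightarrow> nat \<Rightarrow> nat \<Rightarrow> bool" where
  "feedback alg adv T C t = adv (hist alg adv T C t) (price alg adv T C t)"

definition num_corrupted :: "pricing_alg \<Rightarrow> adversary \<Rightarrow> real \<Rightarrow> nat \<Rightarrow> nat \<Rightarrow> nat" where
  "num_corrupted alg adv v T C =
     card {t \<in> {..<T}. feedback alg adv T C t \<noteq> (price alg adv T C t \<le> v)}"

definition regret :: "pricing_alg \<Rightarrow> adversary \<Rightarrow> real \<Rightarrow> nat \<Rightarrow> nat \<Rightarrow> real" where
  "regret alg adv v T C =
     real T * v - (\<Sum>t<T. (if price alg adv T C t \<le> v then price alg adv T C t else 0))"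

end

theory Submission
  imports Defs
begin

datatype st = Srch nat nat nat "nat \<Rightarrow> nat" | Expl nat

definition lo :: "nat \<Rightarrow> nat \<Rightarrow> nat \<Rightarrow> nat" where "lo D d i = i * 2^(D-d)"
definition hi :: "nat \<Rightarrow> nat \<Rightarrow> nat \<Rightarrow> nat" where "hi D d i = (i+1) * 2^(D-d)"
definition mid :: "nat \<Rightarrow> nat \<Rightarrow> nat \<Rightarrow> nat" where "mid D d i = i * 2^(D-d) + 2^(D - Suc d)"

definition leaf :: "nat \<Rightarrow> nat \<Rightarrow> nat \<Rightarrow> (nat \<Rightarrow> nat) \<Rightarrow> st" where
 "leaf C d i cnt = (if C \<le> cnt i then Expl i else Srch d i 0 (cnt(i := Suc (cnt i))))"

fun upd :: "nat \<Rightarrow> nat \<Rightarrow> st \<Rightarrow> bool \<Rightarrow> st" where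
 "upd D C (Srch d i ph cnt) s = (if ph = 0 then (if \<not> s then Srch (d-1) (i div 2) 0 cnt
     else if hi D d i = 2^D then (if d = D then leaf C d i cnt else Srch d i 2 cnt)
     else Srch d i 1 cnt)
   else if ph = 1 then (if s then Srch (d-1) (i div 2) 0 cnt
     else if d = D then leaf C d i cnt else Srch d i 2 cnt)
   else Srch (Suc d) (2*i + (if s then 1 else 0)) 0 cnt)"
| "upd D C (Expl i) s = Expl i"

fun qry :: "nat \<Rightarrow> st \<Rightarrow> nat" where
 "qry D (Srch d i ph cnt) = (if ph = 0 then lo D d i else if ph = 1 then hi D d i else mid D d i)"
| "qry D (Expl i) = i"

definition sinv :: "nat \<Rightarrow> nat \<Rightarrow> st \<Rightarrow> bool" where
 "sinv D C s = (case s of Srch d i ph cnt \<Rightarrow> d \<le> D \<and> i < 2^d \<and> ph \<le> 2 \<and> (ph = 1 \<longrightarrow> hi D d i \<noteq> 2^D)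
     \<and> (ph = 2 \<longrightarrow> d < D) \<and> (\<forall>k. cnt k \<le> C) | Expl i \<Rightarrow> i < 2^D)"

lemma pow_split: "d \<le> D \<Longrightarrow> (2::nat)^D = 2^d * 2^(D-d)"
  by (metis le_add_diff_inverse power_add)

lemma lo_lt: assumes "d \<le> D" "i < 2^d" shows "lo D d i < 2^D"
proof -
  have "Suc i \<le> 2^d" using assms by simp
  hence "(i+1) * 2^(D-d) \<le> 2^d * 2^(D-d)" by (intro mult_right_mono) auto
  hence "hi D d i \<le> 2^D" using pow_split[OF assms(1)] by (simp add: hi_def)
  moreover have "lo D d i < hi D d i" by (simp add: lo_def hi_def)
  ultimately show ?thesis by simp
qed

lemma hi_le: assumes "d \<le> D" "i < 2^d" shows "hi D d i \<le> 2^D"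
proof -
  have "Suc i \<le> 2^d" using assms by simp
  hence "(i+1) * 2^(D-d) \<le> 2^d * 2^(D-d)" by (intro mult_right_mono) auto
  thus "hi D d i \<le> 2^D" using pow_split[OF assms(1)] by (simp add: hi_def)
qed

lemma mid_lt: assumes "d < D" shows "mid D d i < hi D d i"
proof -
  have "(2::nat)^(D-d) = 2 * 2^(D - Suc d)" using assms
    by (metis Suc_diff_Suc power_Suc)
  thus ?thesis by (simp add: mid_def hi_def)
qed

lemma sinv_upd: assumes "sinv D C s" shows "sinv D C (upd D C s b)"
proof (cases s)
  case (Expl i) thus ?thesis using assms by (simp add: sinv_def)
next
  case (Srch d i ph cnt)
  have A: "d \<le> D" "i < 2^d" "ph \<le> 2" "ph = 1 \<longrightarrow> hi D d i \<noteq> 2^D" "ph = 2 \<longrightarrow> d < D" "\<forall>k. cnt k \<le> C"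
    using assms Srch by (auto simp: sinv_def)
  have bt: "sinv D C (Srch (d-1) (i div 2) 0 cnt)"
  proof -
    have "i div 2 < 2^(d-1)"
    proof (cases d)
      case 0 thus ?thesis using A by simp
    next
      case (Suc d') thus ?thesis using A by auto
    qed
    thus ?thesis using A by (auto simp: sinv_def)
  qed
  have lf: "sinv D C (leaf C D i cnt)" if "d = D"
    using A that by (auto simp: leaf_def sinv_def)
  have ch: "sinv D C (Srch (Suc d) (2*i + (if b then 1 else 0)) 0 cnt)" if "d < D"
    using A that by (auto simp: sinv_def)
  show ?thesis using A bt lf ch Srch
    by (auto simp: sinv_def simp del: upd.simps) (auto simp: sinv_def)
qed

lemma qry_lt: assumes "sinv D C s" shows "qry D s < 2^D"
proof (cases s)
  case (Expl i) thus ?thesis using assms by (simp add: sinv_def)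
next
  case (Srch d i ph cnt)
  have A: "d \<le> D" "i < 2^d" "ph \<le> 2" "ph = 1 \<longrightarrow> hi D d i \<noteq> 2^D" "ph = 2 \<longrightarrow> d < D"
    using assms Srch by (auto simp: sinv_def)
  show ?thesis using A lo_lt[OF A(1,2)] hi_le[OF A(1,2)] mid_lt[of d D i] Srch
    by (auto simp: numeral_2_eq_2)
qed


definition good :: "nat \<Rightarrow> nat \<Rightarrow> nat \<Rightarrow> nat \<Rightarrow> bool" where
  "good D j d i = (lo D d i \<le> j \<and> j < hi D d i)"

fun gd :: "nat \<Rightarrow> nat \<Rightarrow> nat \<Rightarrow> nat \<Rightarrow> nat" where
  "gd D j 0 i = 0"
| "gd D j (Suc d) i = (if good D j (Suc d) i then Suc d else gd D j d (i div 2))"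

lemma gd_le: "gd D j d i \<le> d"
  by (induction d arbitrary: i) (auto, meson le_Suc_eq)

lemma gd_good: "good D j d i \<Longrightarrow> gd D j d i = d"
  by (cases d) auto

lemma gd_bad: "\<not> good D j (Suc d) i \<Longrightarrow> gd D j (Suc d) i = gd D j d (i div 2)"
  by simp

lemma root_good: "j < 2^D \<Longrightarrow> good D j 0 0"
  by (simp add: good_def lo_def hi_def)

lemma half_pow: "d < D \<Longrightarrow> (2::nat)^(D-d) = 2 * 2^(D - Suc d)"
  by (metis Suc_diff_Suc power_Suc)

lemma child_good_iff: assumes "d < D" "r \<le> 1"
  shows "good D j (Suc d) (2*i + r) \<longleftrightarrow> good D j d i \<and> (r = 1 \<longleftrightarrow> mid D d i \<le> j)"
proof -
  define s :: nat where "s = 2^(D - Suc d)"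
  have e: "(2::nat)^(D-d) = 2*s" using half_pow[OF assms(1)] s_def by simp
  have l: "lo D d i = 2*i*s" "hi D d i = 2*i*s + 2*s" "mid D d i = 2*i*s + s"
    using e by (auto simp: lo_def hi_def mid_def s_def algebra_simps)
  have l2: "lo D (Suc d) (2*i+r) = 2*i*s + r*s" "hi D (Suc d) (2*i+r) = 2*i*s + r*s + s"
    by (auto simp: lo_def hi_def s_def algebra_simps)
  have "r = 0 \<or> r = 1" using assms by auto
  thus ?thesis using l l2 by (auto simp: good_def)
qed

lemma parent_good: assumes "d < D" "good D j (Suc d) i'" shows "good D j d (i' div 2)"
proof -
  have "i' = 2 * (i' div 2) + i' mod 2" by simp
  moreover have "i' mod 2 \<le> 1" by simp
  ultimately show ?thesis using child_good_iff[OF assms(1), of "i' mod 2" j "i' div 2"] assms(2) by metis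
qed

definition cph :: "nat \<Rightarrow> nat \<Rightarrow> nat \<Rightarrow> nat \<Rightarrow> nat \<Rightarrow> int" where
  "cph D j d i ph = (if ph = 0 then 0 else if ph = 1 then (if lo D d i \<le> j then 1 else -5) else -4)"

definition base :: "nat \<Rightarrow> nat \<Rightarrow> nat \<Rightarrow> nat \<Rightarrow> nat \<Rightarrow> int" where
  "base D j d i ph = (if good D j d i then 3 * int d + int ph
     else 3 * int (gd D j d i) - 3 * (int d - int (gd D j d i)) + cph D j d i ph)"

fun psi :: "nat \<Rightarrow> nat \<Rightarrow> st \<Rightarrow> int" where
  "psi D j (Srch d i ph cnt) = base D j d i ph + 3 * int (cnt j)"
| "psi D j (Expl i) = 0"

lemma base_le: "ph \<le> 2 \<Longrightarrow> d \<le> D \<Longrightarrow> base D j d i ph \<le> 3 * int D + 2"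
  using gd_le[of D j d i] by (auto simp: base_def cph_def)

lemma backtrack: assumes "d \<le> D" "i < 2^d" "j < 2^D" "ph \<le> 1"
  shows "base D j (d-1) (i div 2) 0 \<ge> base D j d i ph + (if good D j d i then -5 else 2)"
proof (cases d)
  case 0
  hence "i = 0" using assms by simp
  thus ?thesis using 0 root_good[OF assms(3)] assms(4) by (auto simp: base_def)
next
  case (Suc d')
  have dl: "d' < D" using assms Suc by simp
  show ?thesis
  proof (cases "good D j d i")
    case True
    hence "good D j d' (i div 2)" using parent_good[OF dl] Suc by simp
    thus ?thesis using True Suc assms(4) by (simp add: base_def)
  next
    case False
    hence g: "gd D j d i = gd D j d' (i div 2)" using Suc by simp
    show ?thesis
    proof (cases "good D j d' (i div 2)")
      case True
      then show ?thesis using False g gd_good[OF True] Suc assms(4)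
        by (auto simp: base_def cph_def)
    next
      case F2: False
      then show ?thesis using False g Suc assms(4) by (auto simp: base_def cph_def)
    qed
  qed
qed


lemma leaf_good: "good D j D i \<longleftrightarrow> i = j"
  by (auto simp: good_def lo_def hi_def)

lemma leaf_cases: "leaf C d i cnt = Expl i \<or> leaf C d i cnt = Srch d i 0 (cnt(i := Suc (cnt i)))"
  by (simp add: leaf_def)

lemma psi_leaf: assumes "leaf C D i cnt = Srch d' i' ph' cnt'" "ph \<le> 1" "ph = 1 \<longrightarrow> hi D D i \<noteq> 2^D"
  shows "psi D j (leaf C D i cnt) \<ge> psi D j (Srch D i ph cnt) + (if i = j then 2 else - cph D j D i ph)"
proof -
  have e: "leaf C D i cnt = Srch D i 0 (cnt(i := Suc (cnt i)))" using assms(1) by (auto simp: leaf_def split: if_splits)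
  show ?thesis
  proof (cases "i = j")
    case True thus ?thesis using e assms(2) leaf_good[of D j i] by (auto simp: base_def)
  next
    case False thus ?thesis using e assms(2) leaf_good[of D j i] by (auto simp: base_def cph_def)
  qed
qed

lemma step_psi: assumes "sinv D C s" "j < 2^D" "upd D C s b = Srch d' i' ph' cnt'"
  shows "psi D j (upd D C s b) \<ge> psi D j s + (if b = (qry D s \<le> j) then 1 else -5)"
proof (cases s)
  case (Expl x) thus ?thesis using assms by simp
next
  case (Srch d i ph cnt)
  have A: "d \<le> D" "i < 2^d" "ph \<le> 2" "ph = 1 \<longrightarrow> hi D d i \<noteq> 2^D" "ph = 2 \<longrightarrow> d < D" "\<forall>k. cnt k \<le> C"
    using assms Srch by (auto simp: sinv_def)
  have gl: "good D j d i \<longleftrightarrow> lo D d i \<le> j \<and> \<not> hi D d i \<le> j" by (auto simp: good_def)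
  have bt: "base D j (d-1) (i div 2) 0 \<ge> base D j d i ph + (if good D j d i then -5 else 2)" if "ph \<le> 1"
    using backtrack[OF A(1,2) assms(2) that] .
  show ?thesis
  proof (cases "ph = 0")
    case ph0: True
    show ?thesis
    proof (cases b)
      case False
      thus ?thesis using Srch ph0 bt gl by (auto simp: base_def cph_def)
    next
      case bT: True
      show ?thesis
      proof (cases "hi D d i = 2^D")
        case hT: True
        have jl: "\<not> hi D d i \<le> j" using hT assms(2) by simp
        show ?thesis
        proof (cases "d = D")
          case True
          have "psi D j (leaf C D i cnt) \<ge> psi D j (Srch D i 0 cnt) + (if i = j then 2 else - cph D j D i 0)"
            using psi_leaf[where ph=0 and j=j] assms(3) Srch ph0 bT hT True by simp
          thus ?thesis using Srch ph0 bT hT True leaf_good[of D j i] gl jl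
            by (auto simp: cph_def)
        next
          case False
          thus ?thesis using Srch ph0 bT hT gl jl by (auto simp: base_def cph_def)
        qed
      next
        case hF: False
        thus ?thesis using Srch ph0 bT gl by (auto simp: base_def cph_def)
      qed
    qed
  next
    case ph0: False
    show ?thesis
    proof (cases "ph = 1")
      case ph1: True
      show ?thesis
      proof (cases b)
        case True
        thus ?thesis using Srch ph1 bt gl by (auto simp: base_def cph_def)
      next
        case bF: False
        show ?thesis
        proof (cases "d = D")
          case True
          have "psi D j (leaf C D i cnt) \<ge> psi D j (Srch D i 1 cnt) + (if i = j then 2 else - cph D j D i 1)"
            using psi_leaf[where ph=1 and j=j] assms(3) Srch ph1 bF True A(4) by simp
          moreover have "lo D d i \<le> hi D d i" by (simp add: lo_def hi_def)
          ultimately show ?thesis using Srch ph1 bF True leaf_good[of D j i] gl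
            by (auto simp: cph_def)
        next
          case False
          thus ?thesis using Srch ph1 bF gl by (auto simp: base_def cph_def)
        qed
      qed
    next
      case ph1: False
      hence ph2: "ph = 2" using A(3) ph0 by simp
      hence dD: "d < D" using A(5) by simp
      define r :: nat where "r = (if b then 1 else 0)"
      have r1: "r \<le> 1" by (simp add: r_def)
      have cg: "good D j (Suc d) (2*i + r) \<longleftrightarrow> good D j d i \<and> (b \<longleftrightarrow> mid D d i \<le> j)"
        using child_good_iff[OF dD r1] by (simp add: r_def)
      have up: "upd D C s b = Srch (Suc d) (2*i + r) 0 cnt" using Srch ph2 by (simp add: r_def)
      have dv: "(2*i + r) div 2 = i" using r1 by simp
      have gdc: "\<not> good D j (Suc d) (2*i + r) \<Longrightarrow> gd D j (Suc d) (2*i + r) = gd D j d i"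
        using dv by simp
      show ?thesis
      proof (cases "good D j d i")
        case True
        show ?thesis
          using True cg gdc gd_good[OF True] up Srch ph2 by (auto simp: base_def cph_def)
      next
        case False
        show ?thesis
          using False cg gdc up Srch ph2 by (auto simp: base_def cph_def)
      qed
    qed
  qed
qed


definition cinv :: "nat \<Rightarrow> nat \<Rightarrow> nat \<Rightarrow> nat \<Rightarrow> st \<Rightarrow> bool" where
  "cinv D C j K s = (case s of Srch d i ph cnt \<Rightarrow>
      (\<forall>k. k \<noteq> j \<longrightarrow> cnt k + (if d = D \<and> i = k \<and> ph = 1 \<and> j < k then 1 else 0) \<le> K)
    | Expl i \<Rightarrow> (i \<noteq> j \<longrightarrow> C < K))"

lemma cinv_mono: "cinv D C j K s \<Longrightarrow> K \<le> K' \<Longrightarrow> cinv D C j K' s"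
proof (cases s)
  case (Srch d i ph cnt)
  assume a: "cinv D C j K s" "K \<le> K'"
  show ?thesis using a Srch unfolding cinv_def by (auto intro: le_trans)
next
  case (Expl i)
  assume a: "cinv D C j K s" "K \<le> K'"
  show ?thesis using a Expl unfolding cinv_def by auto
qed

lemma leafD: "lo D D i = i" "hi D D i = Suc i"
  by (auto simp: lo_def hi_def)

lemma cinv_leaf: assumes "\<forall>k. k \<noteq> j \<longrightarrow> cnt k \<le> K" "i \<noteq> j \<longrightarrow> Suc (cnt i) \<le> K"
  shows "cinv D C j K (leaf C D i cnt)"
  using assms by (auto simp: leaf_def cinv_def)

lemma step_cinv: assumes "sinv D C s" "j < 2^D" "cinv D C j K s"
  shows "cinv D C j (K + (if b = (qry D s \<le> j) then 0 else 1)) (upd D C s b)"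
proof (cases s)
  case (Expl x) thus ?thesis using assms cinv_mono by (auto simp: cinv_def)
next
  case (Srch d i ph cnt)
  have A: "d \<le> D" "i < 2^d" "ph \<le> 2" "ph = 1 \<longrightarrow> hi D d i \<noteq> 2^D" "ph = 2 \<longrightarrow> d < D"
    using assms Srch by (auto simp: sinv_def)
  have I: "\<forall>k. k \<noteq> j \<longrightarrow> cnt k + (if d = D \<and> i = k \<and> ph = 1 \<and> j < k then 1 else 0) \<le> K"
    using assms(3) Srch by (simp add: cinv_def)
  have I0: "\<forall>k. k \<noteq> j \<longrightarrow> cnt k \<le> K" using I by (metis add_leE)
  define K' where "K' = K + (if b = (qry D s \<le> j) then 0 else 1)"
  have KK: "K \<le> K'" by (simp add: K'_def)
  have I0': "\<forall>k. k \<noteq> j \<longrightarrow> cnt k \<le> K'" using I0 KK by force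
  have bt: "cinv D C j K' (Srch d' i' 0 cnt)" for d' i' using I0' by (simp add: cinv_def)
  have two: "cinv D C j K' (Srch d' i' 2 cnt)" for d' i' using I0' by (simp add: cinv_def)
  have "cinv D C j K' (upd D C s b)"
  proof (cases "ph = 0")
    case ph0: True
    show ?thesis
    proof (cases b)
      case False thus ?thesis using Srch ph0 bt by simp
    next
      case bT: True
      show ?thesis
      proof (cases "hi D d i = 2^D")
        case hT: True
        show ?thesis
        proof (cases "d = D")
          case True
          have "i \<noteq> j \<longrightarrow> Suc (cnt i) \<le> K'"
          proof
            assume "i \<noteq> j"
            hence "j < i" using hT True assms(2) leafD[of D i] by simp
            hence "K' = K + 1" using K'_def Srch ph0 bT True leafD[of D i] by simp
            thus "Suc (cnt i) \<le> K'" using I0 \<open>i \<noteq> j\<close> by simp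
          qed
          thus ?thesis using cinv_leaf[OF I0'] Srch ph0 bT hT True by simp
        next
          case False thus ?thesis using Srch ph0 bT hT two by simp
        qed
      next
        case hF: False
        have "cinv D C j K' (Srch d i 1 cnt)"
        proof -
          have "j < i \<longrightarrow> d = D \<longrightarrow> K' = K + 1" using K'_def Srch ph0 bT leafD[of D i] by auto
          show ?thesis unfolding cinv_def
          proof (simp only: st.case, intro allI impI)
            fix k assume "k \<noteq> j"
            show "cnt k + (if d = D \<and> i = k \<and> 1 = 1 \<and> j < k then 1 else 0) \<le> K'"
              using I0 KK \<open>k \<noteq> j\<close> \<open>j < i \<longrightarrow> d = D \<longrightarrow> K' = K + 1\<close>
              by (cases "d = D \<and> i = k \<and> j < k") (auto intro: le_trans)
          qed
        qed
        thus ?thesis using Srch ph0 bT hF by simp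
      qed
    qed
  next
    case ph0: False
    show ?thesis
    proof (cases "ph = 1")
      case ph1: True
      show ?thesis
      proof (cases b)
        case True thus ?thesis using Srch ph1 bt by simp
      next
        case bF: False
        show ?thesis
        proof (cases "d = D")
          case True
          have "i \<noteq> j \<longrightarrow> Suc (cnt i) \<le> K'"
          proof
            assume ij: "i \<noteq> j"
            show "Suc (cnt i) \<le> K'"
            proof (cases "j < i")
              case True thus ?thesis using I ij ph1 \<open>d = D\<close> KK using add_leE le_trans by (smt (verit) One_nat_def Suc_eq_plus1 add.commute)
            next
              case False
              hence "K' = K + 1" using ij K'_def Srch ph1 bF True leafD[of D i] by simp
              thus ?thesis using I0 ij by simp
            qed
          qed
          thus ?thesis using cinv_leaf[OF I0'] Srch ph1 bF True by simp
        next
          case False thus ?thesis using Srch ph1 bF two by simp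
        qed
      qed
    next
      case ph1: False
      hence "ph = 2" using A(3) ph0 by simp
      thus ?thesis using Srch bt by simp
    qed
  qed
  thus ?thesis by (simp add: K'_def)
qed


definition Dof :: "nat \<Rightarrow> nat" where "Dof T = nat \<lceil>log 2 (real T)\<rceil>"
definition run :: "nat \<Rightarrow> nat \<Rightarrow> bool list \<Rightarrow> st" where
  "run D C xs = foldl (upd D C) (Srch 0 0 0 (\<lambda>_. 0)) xs"
definition myalg :: pricing_alg where
  "myalg T C h = min 1 (real (qry (Dof T) (run (Dof T) C (map snd h))) / 2 ^ Dof T)"

lemma myalg_range: "0 \<le> myalg T C h \<and> myalg T C h \<le> 1"
  by (simp add: myalg_def)

lemma hist_Suc_snd: "map snd (hist myalg adv T C (Suc t)) =
   map snd (hist myalg adv T C t) @ [feedback myalg adv T C t]"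
  by (simp add: Let_def feedback_def price_def)

lemma run_Suc: "run (Dof T) C (map snd (hist myalg adv T C (Suc t))) =
   upd (Dof T) C (run (Dof T) C (map snd (hist myalg adv T C t))) (feedback myalg adv T C t)"
  unfolding hist_Suc_snd run_def by simp

lemma price_eq: "price myalg adv T C t =
   min 1 (real (qry (Dof T) (run (Dof T) C (map snd (hist myalg adv T C t)))) / 2 ^ Dof T)"
  by (simp add: price_def myalg_def)

definition jof :: "nat \<Rightarrow> real \<Rightarrow> nat" where
  "jof D v = (if v = 1 then 2^D - 1 else nat \<lfloor>v * 2^D\<rfloor>)"

lemma jof_lt: assumes "0 \<le> v" "v \<le> 1" shows "jof D v < 2^D"
proof (cases "v = 1")
  case True thus ?thesis by (simp add: jof_def)
next
  case False
  hence "v * 2^D < 1 * 2^D" using assms by (intro mult_strict_right_mono) auto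
  hence "\<lfloor>v * 2^D\<rfloor> < 2^D" by (simp add: floor_less_iff)
  thus ?thesis using False assms by (simp add: jof_def nat_less_iff)
qed

lemma jof_iff: assumes "0 \<le> v" "v \<le> 1" "q < (2::nat)^D"
  shows "real q / 2^D \<le> v \<longleftrightarrow> q \<le> jof D v"
proof (cases "v = 1")
  case True
  have "real q \<le> 2^D" using assms(3) by (metis less_imp_le of_nat_le_iff of_nat_numeral of_nat_power)
  thus ?thesis using True assms(3) by (simp add: jof_def)
next
  case False
  have "real q / 2^D \<le> v \<longleftrightarrow> real q \<le> v * 2^D" by (simp add: divide_le_eq)
  also have "\<dots> \<longleftrightarrow> int q \<le> \<lfloor>v * 2^D\<rfloor>" by (simp add: le_floor_iff)
  also have "\<dots> \<longleftrightarrow> q \<le> nat \<lfloor>v * 2^D\<rfloor>" using assms(1) by (simp add: le_nat_iff)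
  finally show ?thesis using False by (simp add: jof_def)
qed

lemma jof_close: assumes "0 \<le> v" "v \<le> 1"
  shows "real (jof D v) / 2^D \<le> v" "v - real (jof D v) / 2^D \<le> 1 / 2^D"
proof -
  have "real (jof D v) / 2^D \<le> v \<and> v - real (jof D v) / 2^D \<le> 1 / 2^D"
  proof (cases "v = 1")
    case True
    have "(1::real) \<le> 2^D" by simp
    hence "real (2^D - 1 :: nat) = 2^D - 1" by (simp add: of_nat_diff)
    thus ?thesis using True by (simp add: jof_def diff_divide_distrib)
  next
    case False
    have f0: "0 \<le> \<lfloor>v * 2^D\<rfloor>" using assms by simp
    have r: "real (jof D v) = of_int \<lfloor>v * 2^D\<rfloor>" using False f0 by (simp add: jof_def)
    have a: "of_int \<lfloor>v * 2^D\<rfloor> \<le> v * 2^D" by (rule of_int_floor_le)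
    have b: "v * 2^D < of_int \<lfloor>v * 2^D\<rfloor> + 1" using floor_correct[of "v * 2^D"] by simp
    have "real (jof D v) / 2^D \<le> v" using a r by (simp add: divide_le_eq)
    moreover have "v - real (jof D v) / 2^D \<le> 1 / 2^D"
    proof -
      have "v * 2^D - real (jof D v) \<le> 1" using b r by linarith
      hence "(v * 2^D - real (jof D v)) / 2^D \<le> 1 / 2^D" by (simp add: divide_right_mono)
      thus ?thesis by (simp add: diff_divide_distrib)
    qed
    ultimately show ?thesis by simp
  qed
  thus "real (jof D v) / 2^D \<le> v" "v - real (jof D v) / 2^D \<le> 1 / 2^D" by auto
qed

lemma sum_ind: "(\<Sum>t<T. if t < M then (1::real) else 0) = real (min T M)"
  by (induction T) (auto simp: min_def)


lemma card_Suc_filter: "card {s \<in> {..<Suc t}. P s} = card {s \<in> {..<t}. P s} + (if P t then 1 else 0)"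
proof (cases "P t")
  case True
  have "{s \<in> {..<Suc t}. P s} = insert t {s \<in> {..<t}. P s}" using True by auto
  thus ?thesis using True by simp
next
  case False
  have "{s \<in> {..<Suc t}. P s} = {s \<in> {..<t}. P s}" using False by (auto simp: less_Suc_eq)
  thus ?thesis using False by simp
qed

lemma main_inv:
  fixes T C :: nat and v :: real and adv :: adversary
  assumes v: "0 \<le> v" "v \<le> 1"
  defines "D \<equiv> Dof T" and "j \<equiv> jof (Dof T) v"
  defines "S \<equiv> \<lambda>t. run (Dof T) C (map snd (hist myalg adv T C t))"
  defines "K \<equiv> \<lambda>t. card {s \<in> {..<t}. feedback myalg adv T C s \<noteq> (price myalg adv T C s \<le> v)}"
  shows "sinv D C (S t) \<and> cinv D C j (K t) (S t) \<and>
         (\<forall>d i ph cnt. S t = Srch d i ph cnt \<longrightarrow> int t - 6 * int (K t) \<le> psi D j (S t))"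
proof (induction t)
  case 0
  have jl: "j < 2^D" unfolding j_def D_def using jof_lt[OF v] .
  have "S 0 = Srch 0 0 0 (\<lambda>_. 0)" by (simp add: S_def run_def)
  moreover have "good D j 0 0" using root_good[OF jl] .
  ultimately show ?case by (simp add: sinv_def cinv_def K_def base_def)
next
  case (Suc t)
  have jl: "j < 2^D" unfolding j_def D_def using jof_lt[OF v] .
  have si: "sinv D C (S t)" and ci: "cinv D C j (K t) (S t)"
    and pi: "\<forall>d i ph cnt. S t = Srch d i ph cnt \<longrightarrow> int t - 6 * int (K t) \<le> psi D j (S t)"
    using Suc.IH by auto
  define b where "b = feedback myalg adv T C t"
  have SS: "S (Suc t) = upd D C (S t) b" unfolding S_def D_def b_def by (rule run_Suc)
  have ql: "qry D (S t) < 2^D" using qry_lt[OF si] .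
  have pr: "price myalg adv T C t = real (qry D (S t)) / 2^D"
  proof -
    have "real (qry D (S t)) / 2^D \<le> 1"
      using ql by (simp add: divide_le_eq)
    thus ?thesis unfolding price_eq S_def D_def by simp
  qed
  have hon: "(price myalg adv T C t \<le> v) = (qry D (S t) \<le> j)"
    unfolding pr j_def D_def using jof_iff[OF v] ql D_def by simp
  have KS: "K (Suc t) = K t + (if b = (qry D (S t) \<le> j) then 0 else 1)"
    unfolding K_def card_Suc_filter using hon b_def by simp
  have s1: "sinv D C (S (Suc t))" using SS sinv_upd[OF si] by simp
  have c1: "cinv D C j (K (Suc t)) (S (Suc t))" using SS KS step_cinv[OF si jl ci] by simp
  have p1: "int (Suc t) - 6 * int (K (Suc t)) \<le> psi D j (S (Suc t))"
    if e: "S (Suc t) = Srch d i ph cnt" for d i ph cnt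
  proof -
    obtain d0 i0 ph0 cnt0 where e0: "S t = Srch d0 i0 ph0 cnt0"
      using e SS by (cases "S t") auto
    have "psi D j (upd D C (S t) b) \<ge> psi D j (S t) + (if b = (qry D (S t) \<le> j) then 1 else -5)"
      using step_psi[OF si jl] e SS by simp
    moreover have "int t - 6 * int (K t) \<le> psi D j (S t)" using pi e0 by simp
    ultimately show ?thesis using SS KS by (auto split: if_splits)
  qed
  show ?case using s1 c1 p1 by blast
qed


lemma Dof_facts: assumes "2 \<le> T"
  shows "real T \<le> 2 ^ Dof T" "real (Dof T) \<le> log 2 (real T) + 1" "1 \<le> log 2 (real T)"
proof -
  have L1: "1 \<le> log 2 (real T)" using assms by simp
  have ce: "real (Dof T) = of_int \<lceil>log 2 (real T)\<rceil>" using L1 by (simp add: Dof_def)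
  have "log 2 (real T) \<le> real (Dof T)" using ce by simp
  hence "2 powr log 2 (real T) \<le> 2 powr real (Dof T)" by simp
  moreover have "2 powr log 2 (real T) = real T" using assms by simp
  moreover have "2 powr real (Dof T) = 2 ^ Dof T" by (simp add: powr_realpow)
  ultimately show "real T \<le> 2 ^ Dof T" by simp
  show "real (Dof T) \<le> log 2 (real T) + 1" using ce by linarith
  show "1 \<le> log 2 (real T)" using L1 .
qed

theorem theoremB2:
  shows "\<exists>K::real. \<exists>alg::pricing_alg.
           (\<forall>T C h. 0 \<le> alg T C h \<and> alg T C h \<le> 1) \<and>
           (\<forall>(T::nat) (C::nat) (v::real) (adv::adversary).
              2 \<le> T \<longrightarrow> 0 \<le> v \<longrightarrow> v \<le> 1 \<longrightarrow>
              num_corrupted alg adv v T C \<le> C \<longrightarrow>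
              regret alg adv v T C \<le> K * (real C + log 2 (real T)))"
proof (rule exI[of _ 10], rule exI[of _ myalg], rule conjI)
  show "\<forall>T C h. 0 \<le> myalg T C h \<and> myalg T C h \<le> 1" using myalg_range by blast
next
  show "\<forall>(T::nat) (C::nat) (v::real) (adv::adversary).
              2 \<le> T \<longrightarrow> 0 \<le> v \<longrightarrow> v \<le> 1 \<longrightarrow>
              num_corrupted myalg adv v T C \<le> C \<longrightarrow>
              regret myalg adv v T C \<le> 10 * (real C + log 2 (real T))"
  proof (intro allI impI)
  fix T C :: nat and v :: real and adv :: adversary
  assume T2: "2 \<le> T" and v0: "0 \<le> v" and v1: "v \<le> 1" and nc: "num_corrupted myalg adv v T C \<le> C"
  define D where "D = Dof T"
  define j where "j = jof (Dof T) v"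
  define S where "S = (\<lambda>t. run (Dof T) C (map snd (hist myalg adv T C t)))"
  define K where "K = (\<lambda>t. card {s \<in> {..<t}. feedback myalg adv T C s \<noteq> (price myalg adv T C s \<le> v)})"
  define M where "M = 3 * D + 3 + 9 * C"
  define N :: real where "N = 2 ^ D"
  define p where "p = (\<lambda>t. price myalg adv T C t)"
  have inv: "sinv D C (S t) \<and> cinv D C j (K t) (S t) \<and>
         (\<forall>d i ph cnt. S t = Srch d i ph cnt \<longrightarrow> int t - 6 * int (K t) \<le> psi D j (S t))" for t
    using main_inv[OF v0 v1, of T C adv t] unfolding D_def j_def S_def K_def by blast
  have KT: "K T \<le> C" using nc unfolding K_def num_corrupted_def by simp
  have Kt: "K t \<le> C" if "t \<le> T" for t
  proof -
    have "K t \<le> K T" unfolding K_def by (rule card_mono) (use that in auto)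
    thus ?thesis using KT by simp
  qed
  have Npos: "N > 0" by (simp add: N_def)
  have pr: "p t = real (qry D (S t)) / N" for t
  proof -
    have ql: "qry D (S t) < 2^D" using qry_lt inv by blast
    have "real (qry D (S t)) / 2^D \<le> 1"
      using ql by (simp add: divide_le_eq)
    thus ?thesis unfolding p_def price_eq S_def D_def N_def by simp
  qed
  have prange: "0 \<le> p t \<and> p t \<le> 1" for t unfolding p_def price_def using myalg_range .
  have bound: "v - (if p t \<le> v then p t else 0) \<le> (if t < M then 1 else 0) + 1 / N" if tT: "t < T" for t
  proof (cases "S t")
    case (Srch d i ph cnt)
    have si: "sinv D C (S t)" using inv by blast
    have A: "d \<le> D" "ph \<le> 2" "cnt j \<le> C" using si Srch by (auto simp: sinv_def)
    have "psi D j (S t) \<le> 3 * int D + 2 + 3 * int C"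
      using base_le[OF A(2,1), of j i] A(3) Srch by simp
    moreover have "int t - 6 * int (K t) \<le> psi D j (S t)" using inv Srch by blast
    moreover have "K t \<le> C" using Kt tT by simp
    ultimately have "t < M" unfolding M_def by linarith
    moreover have "v - (if p t \<le> v then p t else 0) \<le> 1" using prange[of t] v1 by auto
    ultimately show ?thesis using Npos by (smt (verit) divide_pos_pos)
  next
    case (Expl i)
    have "i \<noteq> j \<longrightarrow> C < K t" using inv[of t] Expl by (simp add: cinv_def)
    hence ij: "i = j" using Kt[of t] tT by linarith
    have ptj: "p t = real j / N" using pr[of t] Expl ij by simp
    have "p t \<le> v" "v - p t \<le> 1 / N" using jof_close[OF v0 v1, of D] ptj unfolding j_def N_def D_def by auto
    thus ?thesis by simp
  qed
  have "regret myalg adv v T C = (\<Sum>t<T. v - (if p t \<le> v then p t else 0))"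
    unfolding regret_def p_def by (simp add: sum_subtractf)
  also have "\<dots> \<le> (\<Sum>t<T. (if t < M then 1 else 0) + 1 / N)"
    by (rule sum_mono) (use bound in auto)
  also have "\<dots> = real (min T M) + real T / N"
    by (simp add: sum.distrib sum_ind)
  also have "\<dots> \<le> real M + 1"
  proof -
    have "real T \<le> N" using Dof_facts(1)[OF T2] by (simp add: N_def D_def)
    hence "real T / N \<le> 1" using Npos by simp
    moreover have "real (min T M) \<le> real M" by simp
    ultimately show ?thesis by linarith
  qed
  also have "\<dots> \<le> 10 * (real C + log 2 (real T))"
    using Dof_facts(2,3)[OF T2] unfolding M_def D_def by simp
  finally show "regret myalg adv v T C \<le> 10 * (real C + log 2 (real T))" .
  qed
qed

end
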